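(* Let $\mathbb{D}$ be a division ring, let $2\le m,n<\infty$, let $P$ be an $n\times m$ matrix over $\mathbb{D}$ with $\operatorname{rank}P=r$, and let $\mathcal{A}=\mathfrak{M}(\mathbb{D}, m, n, P)$. If $r=\min\{m,n\}$, then $\mathcal{A}=\sum^2[\mathcal{A},\mathcal{A}][\mathcal{A},\mathcal{A}]$; that is, $\xi(\mathcal{A})\le 2$.
   Context: $\mathfrak{M}(\mathbb{D}, m, n, P)$ denotes the ring of all $m\times n$ matrices over the division ring $\mathbb{D}$ with entrywise addition and multiplication $A\bullet B = APB$. The commutator is $[x,y]=x\bullet y-y\bullet x$; $[X,Y]=\{[x,y]:x\in X,y\in Y\}$, $XY=\{x\bullet y:x\in X,y\in Y\}$, and $\sum^N S$ denotes the set of sums of $N$ elements of $S$. For a ring $\mathbb{R}$ for which some $N\in\mathbb{N}$ satisfies $\mathbb{R}=\sum^N[\mathbb{R},\mathbb{R}][\mathbb{R},\mathbb{R}]$, $\xi(\mathbb{R})$ is the least such $N$. *)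

theory Defs
  imports "HOL-Analysis.Finite_Cartesian_Product"
begin

text \<open>Matrices over a division ring: an n x m matrix is of type 'a^'m^'n
  (rows indexed by 'n). Dimensions are CARD of the finite index types.\<close>

definition left_indep_rows :: "('a::division_ring)^'m^'n \<Rightarrow> 'n set \<Rightarrow> bool" where
  "left_indep_rows P S \<longleftrightarrow>
     (\<forall>c. (\<Sum>i\<in>S. c i *s (P $ i)) = 0 \<longrightarrow> (\<forall>i\<in>S. c i = 0))"

definition drank :: "('a::division_ring)^'m^'n \<Rightarrow> nat" where
  "drank P = Max {card S | S. left_indep_rows P S}"

text \<open>The product of the ring M(D,m,n,P): A \<bullet> B = A P B.\<close>
definition sprod :: "('a::division_ring)^'m^'n \<Rightarrow> 'a^'n^'m \<Rightarrow> 'a^'n^'m \<Rightarrow> 'a^'n^'m" where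
  "sprod P A B = A ** P ** B"

definition scomm :: "('a::division_ring)^'m^'n \<Rightarrow> 'a^'n^'m \<Rightarrow> 'a^'n^'m \<Rightarrow> 'a^'n^'m" where
  "scomm P x y = sprod P x y - sprod P y x"

definition comm_set :: "('a::division_ring)^'m^'n \<Rightarrow> ('a^'n^'m) set" where
  "comm_set P = {scomm P x y | x y. True}"

definition prod_set :: "('a::division_ring)^'m^'n \<Rightarrow> ('a^'n^'m) set \<Rightarrow> ('a^'n^'m) set \<Rightarrow> ('a^'n^'m) set" where
  "prod_set P X Y = {sprod P x y | x y. x \<in> X \<and> y \<in> Y}"

definition sumN :: "nat \<Rightarrow> ('b::comm_monoid_add) set \<Rightarrow> 'b set" where
  "sumN N S = {(\<Sum>i<N. f i) | f. \<forall>i<N. f i \<in> S}"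

end

theory Submission
  imports Defs
begin


lemma mm_add_r: "((A::'a::ring_1^'n^'m) + B) ** C = A ** C + B ** C"
  by (simp add: matrix_matrix_mult_def vec_eq_iff sum.distrib distrib_right)
lemma mm_diff_l: "(A::'a::ring_1^'n^'m) ** (B - C) = A ** B - A ** C"
  by (simp add: matrix_matrix_mult_def vec_eq_iff sum_subtractf right_diff_distrib)
lemma mm_diff_r: "((A::'a::ring_1^'n^'m) - B) ** C = A ** C - B ** C"
  by (simp add: matrix_matrix_mult_def vec_eq_iff sum_subtractf left_diff_distrib)

lemma dep_lemma:
  fixes v :: "'i \<Rightarrow> 'j \<Rightarrow> 'a::division_ring"
  assumes "finite J"
  shows "finite I \<Longrightarrow> card J < card I \<Longrightarrow>
    \<exists>c. (\<exists>i\<in>I. c i \<noteq> 0) \<and> (\<forall>j\<in>J. (\<Sum>i\<in>I. c i * v i j) = 0)"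
  using assms
proof (induction J arbitrary: I v rule: finite_induct)
  case empty
  then obtain i where i: "i \<in> I" by (metis card.empty card_gt_0_iff ex_in_conv)
  show ?case by (rule exI[of _ "\<lambda>x. if x = i then 1 else 0"]) (use i in auto)
next
  case (insert a J)
  show ?case
  proof (cases "\<forall>i\<in>I. v i a = 0")
    case True
    have "card J < card I" using insert by simp
    from insert.IH[OF insert.prems(1) this] obtain c where
      c: "(\<exists>i\<in>I. c i \<noteq> 0)" "(\<forall>j\<in>J. (\<Sum>i\<in>I. c i * v i j) = 0)" by blast
    show ?thesis using c True by (intro exI[of _ c]) auto
  next
    case False
    then obtain i0 where i0: "i0 \<in> I" "v i0 a \<noteq> 0" by blast
    define w where "w i j = v i j - v i a * inverse (v i0 a) * v i0 j" for i j
    define I' where "I' = I - {i0}"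
    have fI': "finite I'" using insert.prems I'_def by simp
    have cI': "card J < card I'" using insert i0 I'_def by (simp add: card_Diff_singleton)
    from insert.IH[OF fI' cI', of w] obtain c' where
      c': "(\<exists>i\<in>I'. c' i \<noteq> 0)" "(\<forall>j\<in>J. (\<Sum>i\<in>I'. c' i * w i j) = 0)" by blast
    define c where "c i = (if i = i0 then - (\<Sum>i\<in>I'. c' i * v i a) * inverse (v i0 a) else c' i)" for i
    have split: "(\<Sum>i\<in>I. c i * v i j) = (\<Sum>i\<in>I'. c' i * w i j)" for j
    proof -
      have "(\<Sum>i\<in>I. c i * v i j) = c i0 * v i0 j + (\<Sum>i\<in>I'. c i * v i j)"
        using i0 insert.prems I'_def by (simp add: sum.remove)
      also have "(\<Sum>i\<in>I'. c i * v i j) = (\<Sum>i\<in>I'. c' i * v i j)"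
        by (rule sum.cong) (auto simp: c_def I'_def)
      also have "c i0 * v i0 j = - (\<Sum>i\<in>I'. c' i * v i a * inverse (v i0 a) * v i0 j)"
        by (simp add: c_def sum_distrib_right mult.assoc)
      finally show ?thesis
        by (simp add: w_def right_diff_distrib sum_subtractf mult.assoc)
    qed
    have wa: "w i a = 0" for i using i0(2) by (simp add: w_def mult.assoc)
    show ?thesis
    proof (intro exI[of _ c] conjI)
      show "\<exists>i\<in>I. c i \<noteq> 0" using c'(1) by (auto simp: c_def I'_def)
      show "\<forall>j\<in>insert a J. (\<Sum>i\<in>I. c i * v i j) = 0"
        using c'(2) by (auto simp: split wa)
    qed
  qed
qed

lemma span_rows:
  fixes P :: "'a::division_ring^'m^'n" and y :: "'a^'m"
  assumes ind: "left_indep_rows P S" and cS: "card S = CARD('m)"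
  shows "\<exists>c. (\<Sum>i\<in>S. c i *s P$i) = y"
proof -
  have fS: "finite S" by simp
  define I where "I = insert None (Some ` S)"
  define v where "v x j = (case x of None \<Rightarrow> y $ j | Some i \<Rightarrow> P $ i $ j)" for x j
  have fI: "finite I" using I_def by simp
  have cI: "card I = card S + 1"
    unfolding I_def by (simp add: card_image)
  have "card (UNIV::'m set) < card I" using cI cS by simp
  from dep_lemma[OF _ fI this, of v] obtain c where
    c: "\<exists>i\<in>I. c i \<noteq> 0" "\<forall>j. (\<Sum>i\<in>I. c i * v i j) = 0" by auto
  have sumI: "(\<Sum>i\<in>I. c i * v i j) = c None * y $ j + (\<Sum>i\<in>S. c (Some i) * P $ i $ j)" for j
    unfolding I_def by (simp add: sum.reindex v_def)
  show ?thesis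
  proof (cases "c None = 0")
    case True
    have "(\<Sum>i\<in>S. c (Some i) *s P$i) = 0"
      using c(2) True by (simp add: vec_eq_iff sum_component sumI)
    moreover have "(\<Sum>i\<in>S. (\<lambda>i. c (Some i)) i *s P$i) = 0 \<longrightarrow> (\<forall>i\<in>S. (\<lambda>i. c (Some i)) i = 0)"
      using ind unfolding left_indep_rows_def by (rule spec)
    ultimately have "\<forall>i\<in>S. c (Some i) = 0" by simp
    with c(1) True show ?thesis by (auto simp: I_def)
  next
    case False
    show ?thesis
    proof (intro exI[of _ "\<lambda>i. - inverse (c None) * c (Some i)"])
      show "(\<Sum>i\<in>S. (- inverse (c None) * c (Some i)) *s P$i) = y"
      proof (simp add: vec_eq_iff sum_component, intro allI)
        fix j
        have e: "(\<Sum>i\<in>S. c (Some i) * P $ i $ j) = - (c None * y $ j)"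
          using c(2) sumI[of j] by (simp add: add_eq_0_iff)
        have "(\<Sum>x\<in>S. - (inverse (c None) * c (Some x) * P $ x $ j))
            = - (inverse (c None) * (\<Sum>i\<in>S. c (Some i) * P $ i $ j))"
          by (simp add: sum_distrib_left sum_negf mult.assoc)
        also have "\<dots> = y $ j" using False by (simp add: e mult.assoc[symmetric])
        finally show "(\<Sum>x\<in>S. - (inverse (c None) * c (Some x) * P $ x $ j)) = y $ j" .
      qed
    qed
  qed
qed

lemma left_inverse_ex:
  fixes P :: "'a::division_ring^'m^'n"
  assumes ind: "left_indep_rows P S" and cS: "card S = CARD('m)"
  shows "\<exists>Q::'a^'n^'m. Q ** P = mat 1"
proof -
  have "\<forall>j. \<exists>c. (\<Sum>i\<in>S. c i *s P$i) = axis j 1"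
    using span_rows[OF ind cS] by blast
  then obtain c where c: "\<And>j. (\<Sum>i\<in>S. c j i *s P$i) = axis j 1" by metis
  define Q where "Q = (\<chi> j i. if i \<in> S then c j i else (0::'a))"
  have "Q ** P = mat 1"
    unfolding vec_eq_iff matrix_matrix_mult_def mat_def
  proof (intro allI)
    fix j t
    have "(\<Sum>k\<in>UNIV. Q $ j $ k * P $ k $ t) = (\<Sum>k\<in>S. c j k * P $ k $ t)"
      by (simp add: Q_def if_distrib if_distribR sum.If_cases)
    also have "\<dots> = axis j 1 $ t" using arg_cong[OF c[of j], of "\<lambda>v. v $ t"]
      by (simp add: sum_component)
    finally show "(\<chi> i j. \<Sum>k\<in>UNIV. Q $ i $ k * P $ k $ j) $ j $ t = (\<chi> i j. if i = j then 1 else 0) $ j $ t"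
      by (simp add: axis_def)
  qed
  thus ?thesis by blast
qed

lemma right_inverse_ex:
  fixes P :: "'a::division_ring^'m^'n"
  assumes ind: "left_indep_rows P UNIV"
  shows "\<exists>R::'a^'n^'m. P ** R = mat 1"
proof -
  define indE where "indE E \<longleftrightarrow> (\<forall>c d. (\<Sum>i\<in>UNIV. c i *s P$i) + (\<Sum>l\<in>E. d l *s axis l (1::'a)) = 0
      \<longrightarrow> (\<forall>i. c i = 0) \<and> (\<forall>l\<in>E. d l = 0))" for E :: "'m set"
  have "indE {}" using ind by (simp add: indE_def left_indep_rows_def)
  moreover have "\<forall>E. indE E \<longrightarrow> card E < CARD('m) + 1"
    by (simp add: card_mono le_imp_less_Suc)
  ultimately obtain E where E: "indE E" and Emax: "\<forall>E'. indE E' \<longrightarrow> card E' \<le> card E"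
    using Lattices_Big.ex_has_greatest_nat[of indE "{}" card "CARD('m) + 1"] by blast
  have ax: "axis l 1 $ t = (if l = t then 1 else (0::'a))" for l t by (simp add: axis_def)
  have span: "\<exists>ab. axis j 1 = (\<Sum>i\<in>UNIV. fst ab i *s P$i) + (\<Sum>l\<in>E. snd ab l *s axis l 1)" for j
  proof (cases "j \<in> E")
    case True
    have "(\<Sum>l\<in>E. (if l = j then 1 else 0) *s axis l (1::'a)) = (\<Sum>l\<in>E. if l = j then axis l 1 else 0)"
      by (rule sum.cong) auto
    also have "\<dots> = axis j 1" using True by (simp add: sum.delta')
    finally show ?thesis
      by (intro exI[of _ "(\<lambda>i. 0, \<lambda>l. if l = j then 1 else 0)"]) simp
  next
    case False
    have "card (insert j E) > card E" using False by simp
    hence "\<not> indE (insert j E)" using Emax by (meson leD)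
    then obtain c d where eq: "(\<Sum>i\<in>UNIV. c i *s P$i) + (\<Sum>l\<in>insert j E. d l *s axis l (1::'a)) = 0"
      and nz: "\<not> ((\<forall>i. c i = 0) \<and> (\<forall>l\<in>insert j E. d l = 0))" unfolding indE_def by blast
    have eq2: "(\<Sum>i\<in>UNIV. c i *s P$i) + d j *s axis j 1 + (\<Sum>l\<in>E. d l *s axis l (1::'a)) = 0"
      using eq False by (simp add: add.assoc)
    have dj: "d j \<noteq> 0"
    proof
      assume "d j = 0"
      hence "(\<Sum>i\<in>UNIV. c i *s P$i) + (\<Sum>l\<in>E. d l *s axis l (1::'a)) = 0" using eq2 by simp
      hence "(\<forall>i. c i = 0) \<and> (\<forall>l\<in>E. d l = 0)" using E unfolding indE_def by blast
      with nz \<open>d j = 0\<close> show False by auto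
    qed
    show ?thesis
    proof (intro exI[of _ "(\<lambda>i. - inverse (d j) * c i, \<lambda>l. - inverse (d j) * d l)"])
      show "axis j 1 = (\<Sum>i\<in>UNIV. fst (\<lambda>i. - inverse (d j) * c i, \<lambda>l. - inverse (d j) * d l) i *s P $ i) +
        (\<Sum>l\<in>E. snd (\<lambda>i. - inverse (d j) * c i, \<lambda>l. - inverse (d j) * d l) l *s axis l 1)"
      unfolding vec_eq_iff
      proof
        fix t
        have e: "(\<Sum>i\<in>UNIV. c i * P$i$t) + d j * axis j 1 $ t + (\<Sum>l\<in>E. d l * axis l (1::'a) $ t) = 0"
          using arg_cong[OF eq2, of "\<lambda>v. v $ t"] by (simp add: sum_component)
        have "(\<Sum>i\<in>UNIV. (- inverse (d j) * c i) * P$i$t) + (\<Sum>l\<in>E. (- inverse (d j) * d l) * axis l 1 $ t)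
          = - inverse (d j) * ((\<Sum>i\<in>UNIV. c i * P$i$t) + (\<Sum>l\<in>E. d l * axis l (1::'a) $ t))"
          by (simp add: sum_distrib_left distrib_left mult.assoc)
        also have "\<dots> = - inverse (d j) * (- (d j * axis j 1 $ t))"
          using e by (simp add: add_eq_0_iff algebra_simps)
        also have "\<dots> = axis j 1 $ t" using dj by (simp add: mult.assoc[symmetric])
        finally show "axis j 1 $ t = ((\<Sum>i\<in>UNIV. fst (\<lambda>i. - inverse (d j) * c i, \<lambda>l. - inverse (d j) * d l) i *s P $ i) +
        (\<Sum>l\<in>E. snd (\<lambda>i. - inverse (d j) * c i, \<lambda>l. - inverse (d j) * d l) l *s axis l 1)) $ t"
          by (simp add: sum_component)
      qed
    qed
  qed
  then obtain g where g: "\<And>j. axis j 1 = (\<Sum>i\<in>UNIV. fst (g j) i *s P$i) + (\<Sum>l\<in>E. snd (g j) l *s axis l 1)"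
    by metis
  have gc: "(if j = t then 1 else 0) = (\<Sum>i\<in>UNIV. fst (g j) i * P$i$t) + (\<Sum>l\<in>E. snd (g j) l * (if l = t then 1 else (0::'a)))" for j t
    using arg_cong[OF g[of j], of "\<lambda>v. v $ t"] by (simp add: sum_component ax)
  define R where "R = (\<chi> j i. fst (g j) i)"
  have "P ** R = mat 1"
    unfolding vec_eq_iff
  proof (intro allI)
    fix i0 i1
    define c where "c i = (\<Sum>j\<in>UNIV. P$i0$j * fst (g j) i) - (if i = i0 then 1 else 0)" for i
    define d where "d l = (\<Sum>j\<in>UNIV. P$i0$j * snd (g j) l)" for l
    have "(\<Sum>i\<in>UNIV. c i *s P$i) + (\<Sum>l\<in>E. d l *s axis l (1::'a)) = 0"
      unfolding vec_eq_iff
    proof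
      fix t
      have h1: "(\<Sum>i\<in>UNIV. (\<Sum>j\<in>UNIV. P$i0$j * fst (g j) i) * P$i$t)
          = (\<Sum>j\<in>UNIV. P$i0$j * (\<Sum>i\<in>UNIV. fst (g j) i * P$i$t))"
      proof -
        have "(\<Sum>i\<in>UNIV. (\<Sum>j\<in>UNIV. P$i0$j * fst (g j) i) * P$i$t)
            = (\<Sum>i\<in>UNIV. \<Sum>j\<in>UNIV. P$i0$j * fst (g j) i * P$i$t)" by (simp add: sum_distrib_right)
        also have "\<dots> = (\<Sum>j\<in>UNIV. \<Sum>i\<in>UNIV. P$i0$j * fst (g j) i * P$i$t)" by (rule sum.swap)
        also have "\<dots> = (\<Sum>j\<in>UNIV. P$i0$j * (\<Sum>i\<in>UNIV. fst (g j) i * P$i$t))"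
          by (simp add: sum_distrib_left mult.assoc)
        finally show ?thesis .
      qed
      have h2: "(\<Sum>l\<in>E. (\<Sum>j\<in>UNIV. P$i0$j * snd (g j) l) * (if l = t then 1 else (0::'a)))
          = (\<Sum>j\<in>UNIV. P$i0$j * (\<Sum>l\<in>E. snd (g j) l * (if l = t then 1 else (0::'a))))"
      proof -
        have "(\<Sum>l\<in>E. (\<Sum>j\<in>UNIV. P$i0$j * snd (g j) l) * (if l = t then 1 else (0::'a)))
            = (\<Sum>l\<in>E. \<Sum>j\<in>UNIV. P$i0$j * snd (g j) l * (if l = t then 1 else (0::'a)))"
          by (simp add: sum_distrib_right)
        also have "\<dots> = (\<Sum>j\<in>UNIV. \<Sum>l\<in>E. P$i0$j * snd (g j) l * (if l = t then 1 else (0::'a)))"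
          by (rule sum.swap)
        also have "\<dots> = (\<Sum>j\<in>UNIV. P$i0$j * (\<Sum>l\<in>E. snd (g j) l * (if l = t then 1 else (0::'a))))"
          by (simp add: sum_distrib_left mult.assoc)
        finally show ?thesis .
      qed
      have h3: "(\<Sum>i\<in>UNIV. (if i = i0 then 1 else 0) * P$i$t) = P$i0$t"
      proof -
        have "(\<Sum>i\<in>UNIV. (if i = i0 then 1 else 0) * P$i$t) = (\<Sum>i\<in>UNIV. if i = i0 then P$i$t else 0)"
          by (rule sum.cong) auto
        thus ?thesis by simp
      qed
      have "(\<Sum>i\<in>UNIV. c i * P$i$t) + (\<Sum>l\<in>E. d l * (if l = t then 1 else 0))
        = (\<Sum>j\<in>UNIV. P$i0$j * ((\<Sum>i\<in>UNIV. fst (g j) i * P$i$t) + (\<Sum>l\<in>E. snd (g j) l * (if l = t then 1 else (0::'a))))) - P$i0$t"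
        unfolding c_def d_def left_diff_distrib sum_subtractf h1 h2 h3
        by (simp add: distrib_left sum.distrib)
      also have "\<dots> = (\<Sum>j\<in>UNIV. P$i0$j * (if j = t then 1 else 0)) - P$i0$t"
        by (simp only: gc[symmetric])
      also have "\<dots> = 0"
      proof -
        have "(\<Sum>j\<in>UNIV. P$i0$j * (if j = t then 1 else 0)) = (\<Sum>j\<in>UNIV. if j = t then P$i0$j else 0)"
          by (rule sum.cong) auto
        thus ?thesis by simp
      qed
      finally show "((\<Sum>i\<in>UNIV. c i *s P$i) + (\<Sum>l\<in>E. d l *s axis l (1::'a))) $ t = 0 $ t"
        by (simp add: sum_component ax)
    qed
    hence "c i1 = 0" using E unfolding indE_def by blast
    thus "(P ** R) $ i0 $ i1 = mat 1 $ i0 $ i1"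
      by (simp add: c_def R_def matrix_matrix_mult_def mat_def eq_commute[of i1 i0])
  qed
  thus ?thesis by blast
qed



lemma mod_Suc_lt: "(a::nat) < K \<Longrightarrow> Suc a mod K = (if Suc a < K then Suc a else 0)"
  by (auto simp: mod_if)

lemma mod_add_lt: "(a::nat) < K \<Longrightarrow> b < K \<Longrightarrow> (a + b) mod K = (if a + b < K then a + b else a + b - K)"
  by (auto simp: le_mod_geq)

definition hh :: "nat \<Rightarrow> 'k::finite" where
  "hh = (SOME h. bij_betw h {0..<CARD('k)} (UNIV::'k set))"

lemma hh_bij: "bij_betw (hh::nat \<Rightarrow> 'k::finite) {0..<CARD('k)} UNIV"
proof -
  have "\<exists>h. bij_betw h {0..<CARD('k)} (UNIV::'k set)"
    using ex_bij_betw_nat_finite[of "UNIV::'k set"] by simp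
  thus ?thesis unfolding hh_def by (rule someI_ex)
qed

definition pos :: "'k::finite \<Rightarrow> nat" where
  "pos x = inv_into {0..<CARD('k)} hh x"

lemma pos_lt: "pos (x::'k::finite) < CARD('k)"
proof -
  have "x \<in> hh ` {0..<CARD('k)}" using hh_bij[where 'k='k] by (simp add: bij_betw_def)
  hence "inv_into {0..<CARD('k)} hh x \<in> {0..<CARD('k)}" by (rule inv_into_into)
  thus ?thesis by (simp add: pos_def)
qed

lemma hh_pos[simp]: "hh (pos (x::'k::finite)) = x"
  using hh_bij[where 'k='k] unfolding pos_def bij_betw_def by (simp add: f_inv_into_f)

lemma pos_hh[simp]: "i < CARD('k::finite) \<Longrightarrow> pos (hh i :: 'k) = i"
  using hh_bij[where 'k='k] unfolding pos_def bij_betw_def by (simp add: inv_into_f_f)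

lemma pos_inj: "pos (x::'k::finite) = pos y \<longleftrightarrow> x = y"
  by (metis hh_pos)

lemma sum_reindex_pos: "(\<Sum>x\<in>(UNIV::'k::finite set). f x) = (\<Sum>l<CARD('k). f (hh l))"
proof -
  have "(\<Sum>l\<in>{0..<CARD('k)}. f (hh l)) = (\<Sum>x\<in>(UNIV::'k set). f x)"
    by (rule sum.reindex_bij_betw[OF hh_bij])
  thus ?thesis by (simp add: atLeast0LessThan)
qed

definition cyc :: "('a::ring_1)^'k^'k::finite" where
  "cyc = (\<chi> x z. if pos z = Suc (pos x) mod CARD('k) then 1 else 0)"
definition cycT :: "('a::ring_1)^'k^'k::finite" where
  "cycT = (\<chi> x z. if pos x = Suc (pos z) mod CARD('k) then 1 else 0)"

definition nxt :: "'k::finite \<Rightarrow> 'k" where "nxt x = hh (Suc (pos x) mod CARD('k))"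
definition prv :: "'k::finite \<Rightarrow> 'k" where "prv x = hh ((pos x + CARD('k) - 1) mod CARD('k))"

lemma pos_nxt: "pos (nxt (x::'k::finite)) = Suc (pos x) mod CARD('k)"
  unfolding nxt_def by (simp add: pos_lt)
lemma pos_prv: "pos (prv (x::'k::finite)) = (pos x + CARD('k) - 1) mod CARD('k)"
  unfolding prv_def by (simp add: pos_lt)
lemma pos_prv': "pos (prv (x::'k::finite)) = (if pos x = 0 then CARD('k) - 1 else pos x - 1)"
proof -
  have K: "CARD('k) > 0" by simp
  show ?thesis unfolding pos_prv using pos_lt[of x]
    by (auto simp: le_mod_geq)
qed

lemma cyc_iff: "pos (z::'k::finite) = Suc (pos x) mod CARD('k) \<longleftrightarrow> z = nxt x"
  by (metis hh_pos nxt_def pos_nxt)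

lemma cyc_iff2: "pos (z::'k::finite) = Suc (pos x) mod CARD('k) \<longleftrightarrow> x = prv z"
proof -
  have "pos z = Suc (pos x) mod CARD('k) \<longleftrightarrow> pos x = pos (prv z)"
    using pos_lt[of x] pos_lt[of z] unfolding pos_prv' by (auto simp: mod_Suc_lt)
  thus ?thesis by (simp add: pos_inj)
qed

lemma cyc_mult: "((cyc::'a::ring_1^'k^'k::finite) ** Y) $ x $ z = Y $ nxt x $ z"
proof -
  have "((cyc::'a^'k^'k) ** Y) $ x $ z = (\<Sum>w\<in>UNIV. (cyc::'a^'k^'k) $ x $ w * Y $ w $ z)"
    by (simp add: matrix_matrix_mult_def)
  also have "\<dots> = (\<Sum>w\<in>UNIV. if w = nxt x then Y $ w $ z else 0)"
    by (rule sum.cong) (auto simp: cyc_def cyc_iff)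
  finally show ?thesis by simp
qed

lemma mult_cyc: "(Y ** (cyc::'a::ring_1^'k^'k::finite)) $ x $ z = Y $ x $ prv z"
proof -
  have "(Y ** (cyc::'a^'k^'k)) $ x $ z = (\<Sum>w\<in>UNIV. Y $ x $ w * (cyc::'a^'k^'k) $ w $ z)"
    by (simp add: matrix_matrix_mult_def)
  also have "\<dots> = (\<Sum>w\<in>UNIV. if w = prv z then Y $ x $ w else 0)"
    by (rule sum.cong) (auto simp: cyc_def cyc_iff2)
  finally show ?thesis by simp
qed

lemma nxt_prv: "nxt (prv (z::'k::finite)) = z"
proof -
  have "pos (nxt (prv z)) = pos z"
    unfolding pos_nxt pos_prv' using pos_lt[of z] by (auto simp: mod_Suc_lt)
  thus ?thesis by (simp add: pos_inj)
qed

lemma cyc_cycT: "(cyc::'a::ring_1^'k^'k::finite) ** cycT = mat 1"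
  unfolding vec_eq_iff
proof (intro allI)
  fix x z :: 'k
  have "pos (nxt x) = Suc (pos z) mod CARD('k) \<longleftrightarrow> pos x = pos z"
    unfolding pos_nxt using pos_lt[of x] pos_lt[of z] by (auto simp: mod_Suc_lt split: if_splits)
  hence "pos (nxt x) = Suc (pos z) mod CARD('k) \<longleftrightarrow> x = z" by (simp add: pos_inj)
  thus "((cyc::'a^'k^'k) ** cycT) $ x $ z = mat 1 $ x $ z"
    by (simp add: cyc_mult cycT_def mat_def)
qed

lemma cycT_cyc: "(cycT::'a::ring_1^'k^'k::finite) ** cyc = mat 1"
  unfolding vec_eq_iff
proof (intro allI)
  fix x z :: 'k
  have "pos x = Suc (pos (prv z)) mod CARD('k) \<longleftrightarrow> x = z"
    using nxt_prv[of z] by (metis cyc_iff)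
  thus "((cycT::'a^'k^'k) ** cyc) $ x $ z = mat 1 $ x $ z"
    by (simp add: mult_cyc cycT_def mat_def)
qed

lemma mod_lt2: "(x::nat) < 2 * K \<Longrightarrow> x mod K = (if x < K then x else x - K)"
  by (auto simp: le_mod_geq)

definition sig :: "nat \<Rightarrow> ('a::ring_1)^'k^'k::finite \<Rightarrow> 'a" where
  "sig d Z = (\<Sum>x\<in>UNIV. Z $ x $ hh ((pos x + d) mod CARD('k)))"

lemma sig_alt: "sig d (Z::('a::ring_1)^'k^'k::finite) = (\<Sum>l<CARD('k). Z $ hh l $ hh ((l + d) mod CARD('k)))"
  unfolding sig_def sum_reindex_pos by (rule sum.cong) auto

definition pre :: "('a::ring_1)^'k^'k::finite \<Rightarrow> 'a^'k^'k" where
  "pre Z = (\<chi> x z. \<Sum>l<pos x. Z $ hh l $ hh ((l + (pos z + CARD('k) - pos x + 1) mod CARD('k)) mod CARD('k)))"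

lemma pre_ok:
  fixes Z :: "('a::ring_1)^'k^'k::finite"
  assumes sz: "\<forall>d<CARD('k). sig d Z = 0"
  shows "cyc ** pre Z - pre Z ** cyc = Z"
  unfolding vec_eq_iff
proof (intro allI)
  fix x z :: 'k
  let ?K = "CARD('k)"
  define i where "i = pos x"
  define j where "j = pos z"
  have i: "i < ?K" and j: "j < ?K" using pos_lt i_def j_def by auto
  define D where "D = (j + ?K - i) mod ?K"
  define f where "f l = Z $ hh l $ hh ((l + D) mod ?K)" for l
  have A: "pre Z $ x $ prv z = (\<Sum>l<i. f l)"
  proof -
    have "(pos (prv z) + ?K - i + 1) mod ?K = D"
    proof (cases "j = 0")
      case True
      have "?K - 1 + ?K - i + 1 = (?K - i) + ?K" using i by arith
      thus ?thesis using True by (simp add: pos_prv' D_def j_def[symmetric])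
    next
      case False
      have "j - 1 + ?K - i + 1 = j + ?K - i" using i False by arith
      thus ?thesis using False by (simp add: pos_prv' D_def j_def[symmetric])
    qed
    thus ?thesis unfolding pre_def f_def i_def by simp
  qed
  have B: "pre Z $ nxt x $ z = (if Suc i < ?K then (\<Sum>l<Suc i. f l) else 0)"
  proof (cases "Suc i < ?K")
    case True
    have "j + ?K - Suc i + 1 = j + ?K - i" using i by arith
    thus ?thesis using True unfolding pre_def f_def
      by (simp add: pos_nxt mod_Suc_lt i D_def i_def[symmetric] j_def[symmetric])
  next
    case False
    thus ?thesis unfolding pre_def by (simp add: pos_nxt mod_Suc_lt i i_def[symmetric])
  qed
  have C: "f i = Z $ x $ z"
  proof -
    have "(i + D) mod ?K = (i + (j + ?K - i)) mod ?K" unfolding D_def by (simp add: mod_add_right_eq)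
    also have "i + (j + ?K - i) = j + ?K" using i by arith
    also have "(j + ?K) mod ?K = j" using j by simp
    finally show ?thesis unfolding f_def using i_def j_def by simp
  qed
  have Dk: "D < ?K" unfolding D_def by simp
  have S: "(\<Sum>l<?K. f l) = 0" using sz Dk unfolding f_def by (simp add: sig_alt)
  show "(cyc ** pre Z - pre Z ** cyc) $ x $ z = Z $ x $ z"
  proof (cases "Suc i < ?K")
    case True
    thus ?thesis by (simp add: cyc_mult mult_cyc A B C)
  next
    case False
    hence "?K = Suc i" using i by simp
    hence "(\<Sum>l<Suc i. f l) = 0" using S by simp
    hence "(\<Sum>l<i. f l) = - f i" by (simp add: add_eq_0_iff)
    thus ?thesis using False by (simp add: cyc_mult mult_cyc A B C)
  qed
qed

lemma diag_back: "(a::nat) < K \<Longrightarrow> d < K \<Longrightarrow> ((a + d) mod K + K - a) mod K = d"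
proof (cases "a + d < K")
  case True
  assume "a < K" "d < K"
  have "a + d + K - a = d + K" by arith
  thus ?thesis using True \<open>d < K\<close> by simp
next
  case False
  assume a: "a < K" "d < K"
  hence "(a + d) mod K = a + d - K" using False by (simp add: mod_add_lt)
  moreover have "a + d - K + K - a = d" using False a by arith
  ultimately show ?thesis using a by simp
qed

definition rfix :: "'k::finite \<Rightarrow> ('a::ring_1)^'k^'k \<Rightarrow> 'a^'k^'k" where
  "rfix r Z = (\<chi> x z. if x = r then Z $ x $ z - sig ((pos z + CARD('k) - pos x) mod CARD('k)) Z else Z $ x $ z)"

definition cfix :: "'k::finite \<Rightarrow> ('a::ring_1)^'k^'k \<Rightarrow> 'a^'k^'k" where
  "cfix c Z = (\<chi> x z. if z = c then Z $ x $ z - sig ((pos z + CARD('k) - pos x) mod CARD('k)) Z else Z $ x $ z)"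

lemma rfix_other: "x \<noteq> r \<Longrightarrow> rfix r Z $ x $ z = Z $ x $ z"
  by (simp add: rfix_def)
lemma cfix_other: "z \<noteq> c \<Longrightarrow> cfix c Z $ x $ z = Z $ x $ z"
  by (simp add: cfix_def)

lemma sig_rfix:
  fixes Z :: "('a::ring_1)^'k^'k::finite"
  assumes d: "d < CARD('k)"
  shows "sig d (rfix r Z) = 0"
proof -
  have "sig d (rfix r Z) = (\<Sum>x\<in>UNIV. (rfix r Z) $ x $ hh ((pos x + d) mod CARD('k)))"
    by (simp only: sig_def)
  also have "\<dots> = (\<Sum>x\<in>UNIV. Z $ x $ hh ((pos x + d) mod CARD('k)) - (if x = r then sig d Z else 0))"
    by (rule sum.cong) (auto simp: rfix_def diag_back[OF pos_lt d])
  also have "\<dots> = 0" by (simp add: sum_subtractf) (simp only: sig_def)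
  finally show ?thesis .
qed

lemma sig_cfix:
  fixes Z :: "('a::ring_1)^'k^'k::finite"
  assumes d: "d < CARD('k)"
  shows "sig d (cfix c Z) = 0"
proof -
  let ?K = "CARD('k)"
  define x0 where "x0 = (hh ((pos c + ?K - d) mod ?K) :: 'k)"
  have iff: "hh ((pos x + d) mod ?K) = c \<longleftrightarrow> x = x0" for x
  proof -
    have "hh ((pos x + d) mod ?K) = c \<longleftrightarrow> (pos x + d) mod ?K = pos c"
      by (metis hh_pos mod_less_divisor pos_hh zero_less_card_finite)
    also have "\<dots> \<longleftrightarrow> pos x = (pos c + ?K - d) mod ?K"
      using pos_lt[of x] pos_lt[of c] d by (auto simp: mod_add_lt mod_lt2)
    also have "\<dots> \<longleftrightarrow> x = x0" unfolding x0_def by (metis hh_pos mod_less_divisor pos_hh zero_less_card_finite)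
    finally show ?thesis .
  qed
  have "sig d (cfix c Z) = (\<Sum>x\<in>UNIV. (cfix c Z) $ x $ hh ((pos x + d) mod CARD('k)))"
    by (simp only: sig_def)
  also have "\<dots> = (\<Sum>x\<in>UNIV. Z $ x $ hh ((pos x + d) mod CARD('k)) - (if x = x0 then sig d Z else 0))"
    by (rule sum.cong) (auto simp: cfix_def diag_back[OF pos_lt d] iff)
  also have "\<dots> = 0" by (simp add: sum_subtractf) (simp only: sig_def)
  finally show ?thesis .
qed

lemma mm_neg_l: "(- (A::'a::ring_1^'n^'m)) ** B = - (A ** B)"
  by (simp add: matrix_matrix_mult_def vec_eq_iff sum_negf)
lemma mm_neg_r: "(A::'a::ring_1^'n^'m) ** (- B) = - (A ** B)"
  by (simp add: matrix_matrix_mult_def vec_eq_iff sum_negf)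

lemma row_irrel:
  assumes "\<forall>x. C $ x $ r = 0" "\<forall>x z. x \<noteq> r \<longrightarrow> W $ x $ z = V $ x $ z"
  shows "(C::'a::ring_1^'n^'m) ** W = C ** V"
proof -
  have "C $ x $ w * W $ w $ z = C $ x $ w * V $ w $ z" for x w z using assms by (cases "w = r") auto
  thus ?thesis by (simp add: vec_eq_iff matrix_matrix_mult_def)
qed

lemma col_irrel:
  assumes "\<forall>z. C $ r $ z = 0" "\<forall>x z. z \<noteq> r \<longrightarrow> W $ x $ z = V $ x $ z"
  shows "W ** (C::'a::ring_1^'n^'m) = V ** C"
proof -
  have "W $ x $ w * C $ w $ z = V $ x $ w * C $ w $ z" for x w z using assms by (cases "w = r") auto
  thus ?thesis by (simp add: vec_eq_iff matrix_matrix_mult_def)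
qed

definition Eu :: "'k::finite \<Rightarrow> 'k \<Rightarrow> ('a::ring_1)^'k^'k" where
  "Eu a b = (\<chi> x z. if x = a \<and> z = b then 1 else 0)"
definition Nsh :: "('a::ring_1)^'k^'k::finite" where
  "Nsh = (\<chi> x z. if pos z = Suc (pos x) then 1 else 0)"
definition NshT :: "('a::ring_1)^'k^'k::finite" where
  "NshT = (\<chi> x z. if pos x = Suc (pos z) then 1 else 0)"
definition Dg :: "('a::ring_1)^'k^'k::finite" where
  "Dg = (\<chi> x z. if x = z then of_nat (pos x) else 0)"

lemma mmult_entry: "(A ** B) $ x $ z = (\<Sum>w\<in>UNIV. A $ x $ w * B $ w $ z)"
  by (simp add: matrix_matrix_mult_def)

lemma Eu_entry[simp]: "(Eu a b :: 'a::ring_1^'k^'k::finite) $ x $ z = (if x = a \<and> z = b then 1 else 0)"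
  by (simp add: Eu_def)
lemma Nsh_entry[simp]: "(Nsh :: 'a::ring_1^'k^'k::finite) $ x $ z = (if pos z = Suc (pos x) then 1 else 0)"
  by (simp add: Nsh_def)
lemma NshT_entry[simp]: "(NshT :: 'a::ring_1^'k^'k::finite) $ x $ z = (if pos x = Suc (pos z) then 1 else 0)"
  by (simp add: NshT_def)

lemma Eu_mult: "((Eu a b::'a::ring_1^'k^'k::finite) ** Y) $ x $ z = (if x = a then Y $ b $ z else 0)"
proof -
  have "((Eu a b::'a^'k^'k) ** Y) $ x $ z = (\<Sum>w\<in>UNIV. if w = b then (if x = a then Y $ w $ z else 0) else 0)"
    unfolding mmult_entry by (rule sum.cong) (auto simp: Eu_def)
  thus ?thesis by simp
qed

lemma mult_Eu: "(Y ** (Eu a b::'a::ring_1^'k^'k::finite)) $ x $ z = (if z = b then Y $ x $ a else 0)"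
proof -
  have "(Y ** (Eu a b::'a^'k^'k)) $ x $ z = (\<Sum>w\<in>UNIV. if w = a then (if z = b then Y $ x $ w else 0) else 0)"
    unfolding mmult_entry by (rule sum.cong) (auto simp: Eu_def)
  thus ?thesis by simp
qed

lemma iffA: "pos (w::'k::finite) = Suc (pos (x::'k)) \<longleftrightarrow> (Suc (pos x) < CARD('k) \<and> w = hh (Suc (pos x)))"
proof
  assume h: "pos w = Suc (pos x)"
  show "Suc (pos x) < CARD('k) \<and> w = hh (Suc (pos x))" using pos_lt[of w] h hh_pos[of w] by simp
next
  assume "Suc (pos x) < CARD('k) \<and> w = hh (Suc (pos x))" thus "pos w = Suc (pos x)" by simp
qed
lemma iffB: "pos (x::'k::finite) = Suc (pos (w::'k)) \<longleftrightarrow> (0 < pos x \<and> w = hh (pos x - 1))"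
proof
  assume h: "pos x = Suc (pos w)"
  show "0 < pos x \<and> w = hh (pos x - 1)" using h hh_pos[of w] by simp
next
  assume a: "0 < pos x \<and> w = hh (pos x - 1)"
  have "pos x - 1 < CARD('k)" using pos_lt[of x] by simp
  thus "pos x = Suc (pos w)" using a by simp
qed

lemma Nsh_mult: "((Nsh::'a::ring_1^'k^'k::finite) ** Y) $ x $ z
    = (if Suc (pos x) < CARD('k) then Y $ hh (Suc (pos x)) $ z else 0)"
proof -
  have "((Nsh::'a^'k^'k) ** Y) $ x $ z = (\<Sum>w\<in>UNIV. if w = hh (Suc (pos x)) then
      (if Suc (pos x) < CARD('k) then Y $ w $ z else 0) else 0)"
    unfolding mmult_entry by (rule sum.cong) (auto simp: Nsh_def iffA)
  thus ?thesis by simp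
qed

lemma NshT_mult: "((NshT::'a::ring_1^'k^'k::finite) ** Y) $ x $ z
    = (if 0 < pos x then Y $ hh (pos x - 1) $ z else 0)"
proof -
  have "((NshT::'a^'k^'k) ** Y) $ x $ z = (\<Sum>w\<in>UNIV. if w = hh (pos x - 1) then
      (if 0 < pos x then Y $ w $ z else 0) else 0)"
    unfolding mmult_entry by (rule sum.cong) (auto simp: NshT_def iffB)
  thus ?thesis by simp
qed

lemma mult_Nsh: "(Y ** (Nsh::'a::ring_1^'k^'k::finite)) $ x $ z
    = (if 0 < pos z then Y $ x $ hh (pos z - 1) else 0)"
proof -
  have "(Y ** (Nsh::'a^'k^'k)) $ x $ z = (\<Sum>w\<in>UNIV. if w = hh (pos z - 1) then
      (if 0 < pos z then Y $ x $ w else 0) else 0)"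
    unfolding mmult_entry by (rule sum.cong) (auto simp: Nsh_def iffB)
  thus ?thesis by simp
qed

lemma mult_NshT: "(Y ** (NshT::'a::ring_1^'k^'k::finite)) $ x $ z
    = (if Suc (pos z) < CARD('k) then Y $ x $ hh (Suc (pos z)) else 0)"
proof -
  have "(Y ** (NshT::'a^'k^'k)) $ x $ z = (\<Sum>w\<in>UNIV. if w = hh (Suc (pos z)) then
      (if Suc (pos z) < CARD('k) then Y $ x $ w else 0) else 0)"
    unfolding mmult_entry by (rule sum.cong) (auto simp: NshT_def iffA)
  thus ?thesis by simp
qed

lemma Dg_mult: "((Dg::'a::ring_1^'k^'k::finite) ** Y) $ x $ z = of_nat (pos x) * Y $ x $ z"
proof -
  have "((Dg::'a^'k^'k) ** Y) $ x $ z = (\<Sum>w\<in>UNIV. if w = x then of_nat (pos x) * Y $ w $ z else 0)"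
    unfolding mmult_entry by (rule sum.cong) (auto simp: Dg_def)
  thus ?thesis by simp
qed

lemma mult_Dg: "(Y ** (Dg::'a::ring_1^'k^'k::finite)) $ x $ z = Y $ x $ z * of_nat (pos z)"
proof -
  have "(Y ** (Dg::'a^'k^'k)) $ x $ z = (\<Sum>w\<in>UNIV. if w = z then Y $ x $ w * of_nat (pos z) else 0)"
    unfolding mmult_entry by (rule sum.cong) (auto simp: Dg_def)
  thus ?thesis by simp
qed

lemma pos_o0: "pos (hh 0 :: 'k::finite) = 0" by simp
lemma pos_o1: "2 \<le> CARD('k::finite) \<Longrightarrow> pos (hh 1 :: 'k) = 1" by simp
lemma pos_ol: "pos (hh (CARD('k::finite) - 1) :: 'k) = CARD('k) - 1" by simp
lemma o01: "2 \<le> CARD('k::finite) \<Longrightarrow> (hh 0 :: 'k) \<noteq> hh 1"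
proof
  assume k: "2 \<le> CARD('k)" and e: "(hh 0 :: 'k) = hh 1"
  hence "pos (hh 0::'k) = pos (hh 1::'k)" by simp
  thus False using pos_o1[OF k] by simp
qed

lemma ident:
  assumes "2 \<le> CARD('k::finite)"
  shows "Eu (hh 0) (hh 1) ** Eu (hh 1) (hh 0) + NshT ** Nsh = (mat 1 :: 'a::ring_1^'k^'k)"
  unfolding vec_eq_iff
proof (intro allI)
  fix x z :: 'k
  have x0: "x = hh 0 \<longleftrightarrow> pos x = 0" using hh_pos[of x] by (auto simp del: hh_pos)
  have px: "0 < pos y \<Longrightarrow> pos (hh (pos y - Suc 0) :: 'k) = pos y - Suc 0" for y :: 'k
    using pos_lt[of y] by simp
  show "(Eu (hh 0) (hh 1) ** Eu (hh 1) (hh 0) + NshT ** Nsh) $ x $ z = (mat 1 :: 'a^'k^'k) $ x $ z"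
    using assms o01[OF assms]
    by (auto simp: Eu_mult NshT_mult mat_def x0 px pos_inj[symmetric])
qed

lemma comm_E01:
  assumes "2 \<le> CARD('k::finite)"
  shows "(Eu (hh 0) (hh 1) :: 'a::ring_1^'k^'k) = Eu (hh 0) (hh 0) ** Eu (hh 0) (hh 1) - Eu (hh 0) (hh 1) ** Eu (hh 0) (hh 0)"
  using o01[OF assms] by (auto simp: vec_eq_iff Eu_mult mult_Eu)

lemma comm_E10:
  assumes "2 \<le> CARD('k::finite)"
  shows "(Eu (hh 1) (hh 0) :: 'a::ring_1^'k^'k) = Eu (hh 1) (hh 1) ** Eu (hh 1) (hh 0) - Eu (hh 1) (hh 0) ** Eu (hh 1) (hh 1)"
  using o01[OF assms] by (auto simp: vec_eq_iff Eu_mult mult_Eu)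

lemma comm_NshT: "(NshT :: 'a::ring_1^'k^'k::finite) = Dg ** NshT - NshT ** Dg"
  by (auto simp: vec_eq_iff Dg_mult mult_Dg)

lemma comm_Nsh: "(Nsh :: 'a::ring_1^'k^'k::finite) = Nsh ** Dg - Dg ** Nsh"
  by (auto simp: vec_eq_iff Dg_mult mult_Dg)

lemma decompL:
  assumes k2: "2 \<le> CARD('k::finite)"
  shows "\<exists>y1 y3. (X::'a::ring_1^'k^'k) = Eu (hh 0) (hh 1) ** (cyc ** y1 - y1 ** cyc) + NshT ** (cyc ** y3 - y3 ** cyc)"
proof -
  define W1 where "W1 = rfix (hh 0) (Eu (hh 1) (hh 0) ** X)"
  define W3 where "W3 = rfix (hh (CARD('k) - 1)) (Nsh ** X)"
  have e1: "cyc ** pre W1 - pre W1 ** cyc = W1" unfolding W1_def by (rule pre_ok) (simp add: sig_rfix)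
  have e3: "cyc ** pre W3 - pre W3 ** cyc = W3" unfolding W3_def by (rule pre_ok) (simp add: sig_rfix)
  have r1: "Eu (hh 0) (hh 1) ** W1 = Eu (hh 0) (hh 1) ** (Eu (hh 1) (hh 0) ** X)"
    unfolding W1_def by (rule row_irrel) (use o01[OF k2] in \<open>auto simp: rfix_other\<close>)
  have r3: "NshT ** W3 = NshT ** (Nsh ** X)"
    unfolding W3_def
  proof (rule row_irrel)
    show "\<forall>x. (NshT::'a^'k^'k) $ x $ hh (CARD('k) - 1) = 0"
    proof
      fix x :: 'k show "(NshT::'a^'k^'k) $ x $ hh (CARD('k) - 1) = 0" using pos_lt[of x] by simp
    qed
  qed (auto simp: rfix_other)
  have "X = (Eu (hh 0) (hh 1) ** Eu (hh 1) (hh 0) + NshT ** Nsh) ** X" by (simp only: ident[OF k2] matrix_mul_lid)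
  also have "\<dots> = Eu (hh 0) (hh 1) ** (Eu (hh 1) (hh 0) ** X) + NshT ** (Nsh ** X)"
    by (simp only: mm_add_r matrix_mul_assoc)
  also have "\<dots> = Eu (hh 0) (hh 1) ** W1 + NshT ** W3"
    by (simp only: r1 r3)
  finally have "X = Eu (hh 0) (hh 1) ** W1 + NshT ** W3" .
  thus ?thesis using e1 e3 by (intro exI[of _ "pre W1"] exI[of _ "pre W3"]) simp
qed

lemma decompR:
  assumes k2: "2 \<le> CARD('k::finite)"
  shows "\<exists>y1 y3. (X::'a::ring_1^'k^'k) = (y1 ** cyc - cyc ** y1) ** Eu (hh 1) (hh 0) + (y3 ** cyc - cyc ** y3) ** Nsh"
proof -
  define W1 where "W1 = cfix (hh 0) (X ** Eu (hh 0) (hh 1))"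
  define W3 where "W3 = cfix (hh (CARD('k) - 1)) (X ** NshT)"
  have e1: "(- pre W1) ** cyc - cyc ** (- pre W1) = W1"
    using pre_ok[of W1] unfolding W1_def by (simp add: sig_cfix mm_neg_l mm_neg_r)
  have e3: "(- pre W3) ** cyc - cyc ** (- pre W3) = W3"
    using pre_ok[of W3] unfolding W3_def by (simp add: sig_cfix mm_neg_l mm_neg_r)
  have r1: "W1 ** Eu (hh 1) (hh 0) = (X ** Eu (hh 0) (hh 1)) ** Eu (hh 1) (hh 0)"
    unfolding W1_def by (rule col_irrel) (use o01[OF k2] in \<open>auto simp: cfix_other\<close>)
  have r3: "W3 ** Nsh = (X ** NshT) ** Nsh"
    unfolding W3_def
  proof (rule col_irrel)
    show "\<forall>z. (Nsh::'a^'k^'k) $ hh (CARD('k) - 1) $ z = 0"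
    proof
      fix z :: 'k show "(Nsh::'a^'k^'k) $ hh (CARD('k) - 1) $ z = 0" using pos_lt[of z] by simp
    qed
  qed (auto simp: cfix_other)
  have "X = X ** (Eu (hh 0) (hh 1) ** Eu (hh 1) (hh 0) + NshT ** Nsh)" by (simp only: ident[OF k2] matrix_mul_rid)
  also have "\<dots> = (X ** Eu (hh 0) (hh 1)) ** Eu (hh 1) (hh 0) + (X ** NshT) ** Nsh"
    by (simp only: matrix_add_ldistrib matrix_mul_assoc)
  also have "\<dots> = W1 ** Eu (hh 1) (hh 0) + W3 ** Nsh"
    by (simp only: r1 r3)
  finally have "X = W1 ** Eu (hh 1) (hh 0) + W3 ** Nsh" .
  thus ?thesis using e1 e3 by (intro exI[of _ "- pre W1"] exI[of _ "- pre W3"]) simp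
qed



lemma QP_cancel: "(Q::'a::ring_1^'n^'m) ** P = mat 1 \<Longrightarrow> Q ** (P ** X) = X"
  by (simp add: matrix_mul_assoc)
lemma LP_zero: "(L::'a::ring_1^'n^'m) ** P = 0 \<Longrightarrow> L ** (P ** X) = 0"
  by (simp add: matrix_mul_assoc)
lemma PL_zero: "(P::'a::ring_1^'n^'m) ** L = 0 \<Longrightarrow> P ** (L ** X) = 0"
  by (simp add: matrix_mul_assoc)

lemma liftL_comm:
  fixes P :: "'a::division_ring^'k^'n" and Q :: "'a^'n^'k" and a b :: "'a^'k^'k"
  assumes "Q ** P = mat 1"
  shows "scomm P (a ** Q) (b ** Q) = (a ** b - b ** a) ** Q"
  unfolding scomm_def sprod_def
  by (simp add: mm_diff_r matrix_mul_assoc[symmetric] QP_cancel[OF assms])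

lemma liftL_comm2:
  fixes P :: "'a::division_ring^'k^'n" and Q :: "'a^'n^'k" and c y :: "'a^'k^'k"
  assumes "Q ** P = mat 1" "L ** P = 0"
  shows "scomm P (c ** Q) (y ** Q + L) = (c ** y - y ** c) ** Q + c ** L"
  unfolding scomm_def sprod_def
  by (simp add: mm_diff_r mm_add_r matrix_add_ldistrib matrix_mul_assoc[symmetric]
      QP_cancel[OF assms(1)] LP_zero[OF assms(2)])

lemma liftL_prod:
  fixes P :: "'a::division_ring^'k^'n" and Q :: "'a^'n^'k" and C W :: "'a^'k^'k"
  assumes "Q ** P = mat 1"
  shows "sprod P (C ** Q) (W ** Q + V) = C ** W ** Q + C ** V"
  unfolding sprod_def
  by (simp add: matrix_add_ldistrib matrix_mul_assoc[symmetric] QP_cancel[OF assms])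

lemma termL:
  fixes P :: "'a::division_ring^'k::finite^'n" and Q :: "'a^'n^'k" and a b y S :: "'a^'k^'k"
  assumes QP: "Q ** P = mat 1" and LP: "L0 ** P = 0"
  shows "sprod P (scomm P (a ** Q) (b ** Q)) (scomm P (cyc ** Q) (y ** Q + cycT ** S ** L0))
    = (a ** b - b ** a) ** (cyc ** y - y ** cyc) ** Q + (a ** b - b ** a) ** S ** L0"
proof -
  have LP': "(cycT ** S ** L0) ** P = 0" using LP by (simp add: matrix_mul_assoc[symmetric])
  have "cyc ** (cycT ** S ** L0) = S ** L0"
    by (simp add: matrix_mul_assoc cyc_cycT)
  thus ?thesis
    by (simp add: liftL_comm[OF QP] liftL_comm2[OF QP LP'] liftL_prod[OF QP] matrix_mul_assoc)
qed

lemma liftR_comm: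
  fixes P :: "'a::division_ring^'m^'k" and R :: "'a^'k^'m" and a b :: "'a^'k^'k"
  assumes "P ** R = mat 1"
  shows "scomm P (R ** a) (R ** b) = R ** (a ** b - b ** a)"
  unfolding scomm_def sprod_def
  by (simp add: mm_diff_l matrix_mul_assoc[symmetric] QP_cancel[OF assms])

lemma liftR_comm2:
  fixes P :: "'a::division_ring^'m^'k" and R :: "'a^'k^'m" and c y :: "'a^'k^'k"
  assumes "P ** R = mat 1" "P ** L = 0"
  shows "scomm P (R ** y + L) (R ** c) = R ** (y ** c - c ** y) + L ** c"
  unfolding scomm_def sprod_def
  by (simp add: mm_diff_l mm_add_r matrix_add_ldistrib matrix_mul_assoc[symmetric]
      QP_cancel[OF assms(1)] assms(2))

lemma liftR_prod:
  fixes P :: "'a::division_ring^'m^'k" and R :: "'a^'k^'m" and C W :: "'a^'k^'k"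
  assumes "P ** R = mat 1"
  shows "sprod P (R ** W + V) (R ** C) = R ** W ** C + V ** C"
  unfolding sprod_def
  by (simp add: mm_add_r matrix_mul_assoc[symmetric] QP_cancel[OF assms])

lemma termR:
  fixes P :: "'a::division_ring^'m^'k::finite" and R :: "'a^'k^'m" and a b y S :: "'a^'k^'k"
  assumes PR: "P ** R = mat 1" and PL: "P ** L0 = 0"
  shows "sprod P (scomm P (R ** y + L0 ** S ** cycT) (R ** cyc)) (scomm P (R ** a) (R ** b))
    = R ** (y ** cyc - cyc ** y) ** (a ** b - b ** a) + L0 ** S ** (a ** b - b ** a)"
proof -
  have PL': "P ** (L0 ** S ** cycT) = 0" using PL by (simp add: matrix_mul_assoc)
  have "(L0 ** S ** cycT) ** cyc = L0 ** S"
    by (simp add: matrix_mul_assoc[symmetric] cycT_cyc)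
  thus ?thesis
    by (simp add: liftR_comm[OF PR] liftR_comm2[OF PR PL'] liftR_prod[OF PR] matrix_mul_assoc)
qed

lemma in_sumN2: "a \<in> S \<Longrightarrow> b \<in> S \<Longrightarrow> a + b \<in> sumN 2 S"
  unfolding sumN_def
  by (rule CollectI, rule exI[of _ "\<lambda>i. if i = 0 then a else b"]) (auto simp: numeral_2_eq_2)

lemma in_prod: "x \<in> comm_set P \<Longrightarrow> y \<in> comm_set P \<Longrightarrow> sprod P x y \<in> prod_set P (comm_set P) (comm_set P)"
  unfolding prod_set_def by blast

lemma in_comm: "scomm P x y \<in> comm_set P"
  unfolding comm_set_def by blast

theorem theorem2p7:
  fixes P :: "('a::division_ring)^'m^'n"
  assumes "CARD('m) \<ge> 2" and "CARD('n) \<ge> 2"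
    and "drank P = min CARD('m) CARD('n)"
  shows "sumN 2 (prod_set P (comm_set P) (comm_set P)) = (UNIV :: ('a^'n^'m) set)"
proof -
  let ?SS = "sumN 2 (prod_set P (comm_set P) (comm_set P))"
  have eqs: "{card S | S. left_indep_rows P S} = card ` {S. left_indep_rows P S}" by auto
  have fin: "finite {card S | S. left_indep_rows P S}" unfolding eqs by simp
  have "left_indep_rows P {}" by (simp add: left_indep_rows_def)
  hence ne: "{card S | S. left_indep_rows P S} \<noteq> {}" by blast
  have "drank P \<in> {card S | S. left_indep_rows P S}"
    unfolding drank_def by (rule Max_in[OF fin ne])
  then obtain S where indS: "left_indep_rows P S" and cS: "card S = drank P" by auto
  have "A \<in> ?SS" for A
  proof (cases "CARD('m) \<le> CARD('n)")
    case True
    hence "card S = CARD('m)" using cS assms(3) by simp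
    from left_inverse_ex[OF indS this] obtain Q :: "'a^'n^'m" where QP: "Q ** P = mat 1" by blast
    define X0 where "X0 = A ** P"
    define L0 where "L0 = A - X0 ** Q"
    have LP: "L0 ** P = 0" unfolding L0_def X0_def
      by (simp add: mm_diff_r matrix_mul_assoc[symmetric] QP_cancel[OF QP] QP)
    obtain y1 y3 where dec: "X0 = Eu (hh 0) (hh 1) ** (cyc ** y1 - y1 ** cyc) + NshT ** (cyc ** y3 - y3 ** cyc)"
      using decompL[OF assms(1), of X0] by blast
    define T1 where "T1 = sprod P (scomm P (Eu (hh 0) (hh 0) ** Q) (Eu (hh 0) (hh 1) ** Q))
        (scomm P (cyc ** Q) (y1 ** Q + cycT ** Eu (hh 1) (hh 0) ** L0))"
    define T3 where "T3 = sprod P (scomm P (Dg ** Q) (NshT ** Q))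
        (scomm P (cyc ** Q) (y3 ** Q + cycT ** Nsh ** L0))"
    have t1: "T1 = Eu (hh 0) (hh 1) ** (cyc ** y1 - y1 ** cyc) ** Q + Eu (hh 0) (hh 1) ** Eu (hh 1) (hh 0) ** L0"
      unfolding T1_def termL[OF QP LP] comm_E01[OF assms(1), symmetric] ..
    have t3: "T3 = NshT ** (cyc ** y3 - y3 ** cyc) ** Q + NshT ** Nsh ** L0"
      unfolding T3_def termL[OF QP LP] comm_NshT[symmetric] ..
    have "T1 + T3 = (Eu (hh 0) (hh 1) ** (cyc ** y1 - y1 ** cyc) + NshT ** (cyc ** y3 - y3 ** cyc)) ** Q
        + (Eu (hh 0) (hh 1) ** Eu (hh 1) (hh 0) + NshT ** Nsh) ** L0"
      unfolding t1 t3 mm_add_r by (simp add: algebra_simps)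
    also have "\<dots> = A" unfolding dec[symmetric] ident[OF assms(1)] L0_def by simp
    finally have "A = T1 + T3" by simp
    moreover have "T1 \<in> prod_set P (comm_set P) (comm_set P)" unfolding T1_def by (intro in_prod in_comm)
    moreover have "T3 \<in> prod_set P (comm_set P) (comm_set P)" unfolding T3_def by (intro in_prod in_comm)
    ultimately show ?thesis using in_sumN2 by metis
  next
    case False
    hence "card S = CARD('n)" using cS assms(3) by simp
    hence "S = UNIV" by (simp add: card_eq_UNIV_imp_eq_UNIV)
    hence "left_indep_rows P UNIV" using indS by simp
    from right_inverse_ex[OF this] obtain R :: "'a^'n^'m" where PR: "P ** R = mat 1" by blast
    define X0 where "X0 = P ** A"
    define L0 where "L0 = A - R ** X0"
    have PL: "P ** L0 = 0" unfolding L0_def X0_def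
      by (simp add: mm_diff_l matrix_mul_assoc[symmetric] QP_cancel[OF PR])
    obtain y1 y3 where dec: "X0 = (y1 ** cyc - cyc ** y1) ** Eu (hh 1) (hh 0) + (y3 ** cyc - cyc ** y3) ** Nsh"
      using decompR[OF assms(2), of X0] by blast
    define T1 where "T1 = sprod P (scomm P (R ** y1 + L0 ** Eu (hh 0) (hh 1) ** cycT) (R ** cyc))
        (scomm P (R ** Eu (hh 1) (hh 1)) (R ** Eu (hh 1) (hh 0)))"
    define T3 where "T3 = sprod P (scomm P (R ** y3 + L0 ** NshT ** cycT) (R ** cyc))
        (scomm P (R ** Nsh) (R ** Dg))"
    have t1: "T1 = R ** (y1 ** cyc - cyc ** y1) ** Eu (hh 1) (hh 0) + L0 ** Eu (hh 0) (hh 1) ** Eu (hh 1) (hh 0)"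
      unfolding T1_def termR[OF PR PL] comm_E10[OF assms(2), symmetric] ..
    have t3: "T3 = R ** (y3 ** cyc - cyc ** y3) ** Nsh + L0 ** NshT ** Nsh"
      unfolding T3_def termR[OF PR PL] comm_Nsh[symmetric] ..
    have "T1 + T3 = R ** ((y1 ** cyc - cyc ** y1) ** Eu (hh 1) (hh 0) + (y3 ** cyc - cyc ** y3) ** Nsh)
        + L0 ** (Eu (hh 0) (hh 1) ** Eu (hh 1) (hh 0) + NshT ** Nsh)"
      unfolding t1 t3 matrix_add_ldistrib by (simp add: algebra_simps matrix_mul_assoc)
    also have "\<dots> = A" unfolding dec[symmetric] ident[OF assms(2)] L0_def by simp
    finally have "A = T1 + T3" by simp
    moreover have "T1 \<in> prod_set P (comm_set P) (comm_set P)" unfolding T1_def by (intro in_prod in_comm)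
    moreover have "T3 \<in> prod_set P (comm_set P) (comm_set P)" unfolding T3_def by (intro in_prod in_comm)
    ultimately show ?thesis using in_sumN2 by metis
  qed
  thus ?thesis by blast
qed

end
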